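(* For every sparse paving matroid $M$, the basis pair graph $G(M)$ is connected.
   Context: A matroid $M$ of rank $r$ is sparse paving if every nonspanning circuit of $M$ is a hyperplane; equivalently, every $r$-element subset of $E(M)$ is either a basis or a circuit-hyperplane. The basis pair graph $G(M)$ has as vertices the ordered triples $(A_1,A_2,A_3)$ of subsets of $E(M)$ where $A_1$ and $A_2$ are disjoint bases of $M$ and $A_3=E(M)-(A_1\cup A_2)$ ($A_3$ need not be a basis). Two vertices $(A_1,A_2,A_3)$ and $(B_1,B_2,B_3)$ are adjacent if $|A_1-B_1|+|A_2-B_2|+|A_3-B_3|=2$, i.e., one is obtained from the other by switching a pair of elements lying in two different sets of the triple. (A graph with no vertices is regarded as connected.) *)

theory Defs
  imports Main
begin

definition matroid :: "'a set \<Rightarrow> ('a set \<Rightarrow> bool) \<Rightarrow> bool" where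
  "matroid E indep \<longleftrightarrow>
     finite E \<and>
     (\<forall>X. indep X \<longrightarrow> X \<subseteq> E) \<and>
     indep {} \<and>
     (\<forall>X Y. indep X \<and> Y \<subseteq> X \<longrightarrow> indep Y) \<and>
     (\<forall>X Y. indep X \<and> indep Y \<and> card X < card Y \<longrightarrow>
        (\<exists>e \<in> Y - X. indep (insert e X)))"

definition basis :: "'a set \<Rightarrow> ('a set \<Rightarrow> bool) \<Rightarrow> 'a set \<Rightarrow> bool" where
  "basis E indep B \<longleftrightarrow> indep B \<and> (\<forall>X. indep X \<and> B \<subseteq> X \<and> X \<subseteq> E \<longrightarrow> X = B)"

definition circuit :: "'a set \<Rightarrow> ('a set \<Rightarrow> bool) \<Rightarrow> 'a set \<Rightarrow> bool" where
  "circuit E indep C \<longleftrightarrow> C \<subseteq> E \<and> \<not> indep C \<and> (\<forall>X. X \<subset> C \<longrightarrow> indep X)"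

definition rk :: "('a set \<Rightarrow> bool) \<Rightarrow> 'a set \<Rightarrow> nat" where
  "rk indep X = Max {card I | I. I \<subseteq> X \<and> indep I}"

definition mrank :: "'a set \<Rightarrow> ('a set \<Rightarrow> bool) \<Rightarrow> nat" where
  "mrank E indep = rk indep E"

definition cl :: "'a set \<Rightarrow> ('a set \<Rightarrow> bool) \<Rightarrow> 'a set \<Rightarrow> 'a set" where
  "cl E indep X = {e \<in> E. rk indep (insert e X) = rk indep X}"

definition flat :: "'a set \<Rightarrow> ('a set \<Rightarrow> bool) \<Rightarrow> 'a set \<Rightarrow> bool" where
  "flat E indep F \<longleftrightarrow> F \<subseteq> E \<and> cl E indep F = F"

definition hyperplane :: "'a set \<Rightarrow> ('a set \<Rightarrow> bool) \<Rightarrow> 'a set \<Rightarrow> bool" where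
  "hyperplane E indep H \<longleftrightarrow> flat E indep H \<and> mrank E indep \<ge> 1 \<and>
     rk indep H = mrank E indep - 1"

definition spanning :: "'a set \<Rightarrow> ('a set \<Rightarrow> bool) \<Rightarrow> 'a set \<Rightarrow> bool" where
  "spanning E indep X \<longleftrightarrow> X \<subseteq> E \<and> rk indep X = mrank E indep"

definition sparse_paving :: "'a set \<Rightarrow> ('a set \<Rightarrow> bool) \<Rightarrow> bool" where
  "sparse_paving E indep \<longleftrightarrow> matroid E indep \<and>
     (\<forall>C. circuit E indep C \<and> \<not> spanning E indep C \<longrightarrow> hyperplane E indep C)"

definition bp_vertices :: "'a set \<Rightarrow> ('a set \<Rightarrow> bool) \<Rightarrow> ('a set \<times> 'a set \<times> 'a set) set" where
  "bp_vertices E indep = {(A1, A2, A3). basis E indep A1 \<and> basis E indep A2 \<and>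
       A1 \<inter> A2 = {} \<and> A3 = E - (A1 \<union> A2)}"

definition bp_adj :: "('a set \<times> 'a set \<times> 'a set) \<Rightarrow> ('a set \<times> 'a set \<times> 'a set) \<Rightarrow> bool" where
  "bp_adj A B \<longleftrightarrow> (case A of (A1, A2, A3) \<Rightarrow> case B of (B1, B2, B3) \<Rightarrow>
      card (A1 - B1) + card (A2 - B2) + card (A3 - B3) = 2)"

definition graph_connected :: "'v set \<Rightarrow> ('v \<Rightarrow> 'v \<Rightarrow> bool) \<Rightarrow> bool" where
  "graph_connected V adj \<longleftrightarrow>
     (\<forall>x\<in>V. \<forall>y\<in>V. (\<lambda>u v. u \<in> V \<and> v \<in> V \<and> adj u v)\<^sup>*\<^sup>* x y)"

end

theory Submission
  imports Defs
begin


lemma rk_fin: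
  assumes "finite X"
  shows "finite {card I |I. I \<subseteq> X \<and> indep I}"
proof -
  have "{card I |I. I \<subseteq> X \<and> indep I} \<subseteq> card ` Pow X" by auto
  thus ?thesis using assms finite_subset by blast
qed

lemma rk_ex:
  assumes m: "matroid E indep" and XE: "X \<subseteq> E"
  shows "\<exists>I \<subseteq> X. indep I \<and> card I = rk indep X"
proof -
  have fX: "finite X" using m XE finite_subset by (auto simp: matroid_def)
  have "0 \<in> {card I |I. I \<subseteq> X \<and> indep I}" using m by (auto simp: matroid_def intro!: exI[of _ "{}"])
  hence "rk indep X \<in> {card I |I. I \<subseteq> X \<and> indep I}"
    unfolding rk_def using Max_in[OF rk_fin[OF fX]] by blast
  thus ?thesis by auto
qed

lemma rk_ge:
  assumes m: "matroid E indep" and XE: "X \<subseteq> E" and "I \<subseteq> X" "indep I"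
  shows "card I \<le> rk indep X"
proof -
  have fX: "finite X" using m XE finite_subset by (auto simp: matroid_def)
  show ?thesis unfolding rk_def using Max_ge[OF rk_fin[OF fX]] assms by blast
qed

lemma aug: "matroid E indep \<Longrightarrow> indep X \<Longrightarrow> indep Y \<Longrightarrow> card X < card Y \<Longrightarrow> \<exists>e\<in>Y-X. indep (insert e X)"
  by (simp add: matroid_def)

lemma indep_sub: "matroid E indep \<Longrightarrow> indep X \<Longrightarrow> X \<subseteq> E"
  by (auto simp: matroid_def)

lemma indep_fin: "matroid E indep \<Longrightarrow> indep X \<Longrightarrow> finite X"
  by (auto simp: matroid_def intro: finite_subset)

lemma basis_iff:
  assumes m: "matroid E indep"
  shows "basis E indep B \<longleftrightarrow> indep B \<and> card B = mrank E indep"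
proof
  assume b: "basis E indep B"
  hence iB: "indep B" by (simp add: basis_def)
  have BE: "B \<subseteq> E" using indep_sub[OF m iB] .
  have le: "card B \<le> mrank E indep" unfolding mrank_def using rk_ge[OF m _ BE iB] by simp
  obtain I where I: "I \<subseteq> E" "indep I" "card I = mrank E indep"
    using rk_ex[OF m, of E] unfolding mrank_def by blast
  have "\<not> card B < card I"
  proof
    assume "card B < card I"
    then obtain e where e: "e \<in> I - B" "indep (insert e B)" using aug[OF m iB I(2)] by blast
    have "insert e B = B" using b e I BE by (auto simp: basis_def)
    thus False using e by blast
  qed
  thus "indep B \<and> card B = mrank E indep" using le I iB by simp
next
  assume a: "indep B \<and> card B = mrank E indep"
  show "basis E indep B" unfolding basis_def
  proof (intro conjI allI impI)
    show "indep B" using a by simp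
    fix X assume X: "indep X \<and> B \<subseteq> X \<and> X \<subseteq> E"
    have "card X \<le> card B" using rk_ge[OF m _ _, of E X] X a unfolding mrank_def by simp
    moreover have "finite X" using indep_fin[OF m] X by blast
    ultimately show "X = B" using X card_subset_eq card_mono by (metis antisym)
  qed
qed

lemma ch:
  assumes sp: "sparse_paving E indep" and XE: "X \<subseteq> E" and cX: "card X = mrank E indep"
    and dep: "\<not> indep X"
  shows "rk indep X = mrank E indep - 1 \<and> cl E indep X = X \<and> (\<forall>Y. Y \<subset> X \<longrightarrow> indep Y)"
proof -
  have m: "matroid E indep" using sp by (simp add: sparse_paving_def)
  have fE: "finite E" using m by (simp add: matroid_def)
  have fX: "finite X" using XE fE finite_subset by blast
  have "\<exists>n. \<exists>C \<subseteq> X. \<not> indep C \<and> card C = n" using dep by blast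
  then obtain n where n: "\<exists>C \<subseteq> X. \<not> indep C \<and> card C = n"
     and nmin: "\<forall>m<n. \<not>(\<exists>C \<subseteq> X. \<not> indep C \<and> card C = m)"
    using exists_least_iff[of "\<lambda>n. \<exists>C \<subseteq> X. \<not> indep C \<and> card C = n"] by blast
  then obtain C where CX: "C \<subseteq> X" and dC: "\<not> indep C" and cC: "card C = n" by blast
  have fC: "finite C" using CX fX finite_subset by blast
  have minC: "\<forall>Y. Y \<subset> C \<longrightarrow> indep Y"
  proof (intro allI impI)
    fix Y assume "Y \<subset> C"
    then have "card Y < card C" using fC psubset_card_mono by blast
    moreover have "Y \<subseteq> X" using \<open>Y \<subset> C\<close> CX by blast
    ultimately show "indep Y" using nmin cC by blast
  qed
  have CE: "C \<subseteq> E" using CX XE by blast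
  have circ: "circuit E indep C" using CE dC minC by (auto simp: circuit_def)
  obtain I where I: "I \<subseteq> C" "indep I" "card I = rk indep C" using rk_ex[OF m CE] by blast
  have "I \<noteq> C" using I dC by blast
  hence cIC: "card I < card C" using I fC psubset_card_mono by blast
  have "card C \<le> card X" using CX fX card_mono by blast
  hence nsp: "\<not> spanning E indep C" using cIC I cX by (auto simp: spanning_def)
  hence hyp: "hyperplane E indep C" using sp circ by (auto simp: sparse_paving_def)
  hence r1: "mrank E indep \<ge> 1" and rkC: "rk indep C = mrank E indep - 1" and flC: "cl E indep C = C"
    by (auto simp: hyperplane_def flat_def)
  have "C \<noteq> {}" using dC m by (auto simp: matroid_def)
  then obtain e where e: "e \<in> C" by blast
  have "indep (C - {e})" using minC e by blast
  hence "card (C - {e}) \<le> rk indep C" using rk_ge[OF m CE, of "C - {e}"] by blast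
  moreover have "card C > 0" using e fC card_gt_0_iff by blast
  ultimately have "card C \<ge> mrank E indep" using cIC I rkC r1 by linarith
  hence "C = X" using CX fX cX card_subset_eq \<open>card C \<le> card X\<close> by (metis antisym)
  then show ?thesis using rkC flC minC by simp
qed

lemma exch_m:
  assumes sp: "sparse_paving E indep" and XE: "X \<subseteq> E" and cX: "card X = mrank E indep"
    and a: "a \<in> X" and b: "b \<in> E" "b \<notin> X"
  shows "indep X \<or> indep (insert b (X - {a}))"
proof (rule ccontr)
  assume "\<not> ?thesis"
  hence dX: "\<not> indep X" and dY: "\<not> indep (insert b (X - {a}))" by auto
  have m: "matroid E indep" using sp by (simp add: sparse_paving_def)
  have fX: "finite X" using XE m finite_subset by (auto simp: matroid_def)
  note c = ch[OF sp XE cX dX]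
  have iJ: "indep (X - {a})" using c a by blast
  have cJ: "card (X - {a}) = mrank E indep - 1" using a fX cX by simp
  have "b \<notin> cl E indep X" using c b by simp
  hence ne: "rk indep (insert b X) \<noteq> mrank E indep - 1" using b c by (simp add: cl_def)
  have bXE: "insert b X \<subseteq> E" using b XE by blast
  have "card (X - {a}) \<le> rk indep (insert b X)" using rk_ge[OF m bXE _ iJ] by blast
  then obtain I where I: "I \<subseteq> insert b X" "indep I" "card (X - {a}) < card I"
    using rk_ex[OF m bXE] ne cJ by (metis le_neq_implies_less)
  then obtain e where e: "e \<in> I - (X - {a})" "indep (insert e (X - {a}))"
    using aug[OF m iJ I(2)] by blast
  have "e = a \<or> e = b" using e I by blast
  moreover have "insert a (X - {a}) = X" using a by blast
  ultimately show False using e dX dY by auto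
qed



locale spx =
  fixes E :: "'a set" and r :: nat and bas :: "'a set \<Rightarrow> bool"
  assumes finE: "finite E"
  and bas_sub: "bas S \<Longrightarrow> S \<subseteq> E"
  and bas_card: "bas S \<Longrightarrow> card S = r"
  and exch: "X \<subseteq> E \<Longrightarrow> card X = r \<Longrightarrow> a \<in> X \<Longrightarrow> b \<in> E \<Longrightarrow> b \<notin> X \<Longrightarrow> bas X \<or> bas (insert b (X - {a}))"
begin

definition V where "V = {(A1, A2, A3). bas A1 \<and> bas A2 \<and> A1 \<inter> A2 = {} \<and> A3 = E - (A1 \<union> A2)}"

definition R where "R = (\<lambda>u v. u \<in> V \<and> v \<in> V \<and> bp_adj u v)"

lemma exch': "X \<subseteq> E \<Longrightarrow> card X = r \<Longrightarrow> a \<in> X \<Longrightarrow> b \<in> E \<Longrightarrow> b \<notin> X \<Longrightarrow> Y = insert b (X - {a})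
  \<Longrightarrow> \<not> bas Y \<Longrightarrow> bas X"
  using exch by blast

lemma swap_card: "S \<subseteq> E \<Longrightarrow> card S = r \<Longrightarrow> a \<in> S \<Longrightarrow> b \<notin> S \<Longrightarrow> card (insert b (S - {a})) = r"
proof -
  assume "S \<subseteq> E" "card S = r" "a \<in> S" "b \<notin> S"
  moreover have "finite S" using \<open>S \<subseteq> E\<close> finE finite_subset by blast
  moreover have "card S > 0" using \<open>finite S\<close> \<open>a \<in> S\<close> card_gt_0_iff by blast
  ultimately show ?thesis by (simp add: card_gt_0_iff Suc_diff_1)
qed

lemma two_cand1:
  assumes "S \<subseteq> E" "card S = r" "y \<in> E" "y \<notin> S" "x1 \<in> S" "x2 \<in> S" "x1 \<noteq> x2"
  shows "bas (insert y (S - {x1})) \<or> bas (insert y (S - {x2}))"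
proof -
  have "insert x1 (insert y (S - {x1}) - {x2}) = insert y (S - {x2})" using assms by auto
  moreover have "bas (insert y (S - {x1})) \<or> bas (insert x1 (insert y (S - {x1}) - {x2}))"
    by (rule exch) (use assms swap_card in auto)
  ultimately show ?thesis by simp
qed

lemma two_cand2:
  assumes "S \<subseteq> E" "card S = r" "x \<in> S" "y1 \<in> E" "y1 \<notin> S" "y2 \<in> E" "y2 \<notin> S" "y1 \<noteq> y2"
  shows "bas (insert y1 (S - {x})) \<or> bas (insert y2 (S - {x}))"
proof -
  have "insert y2 (insert y1 (S - {x}) - {y1}) = insert y2 (S - {x})" using assms by auto
  moreover have "bas (insert y1 (S - {x})) \<or> bas (insert y2 (insert y1 (S - {x}) - {y1}))"
    by (rule exch) (use assms swap_card in auto)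
  ultimately show ?thesis by simp
qed

lemma toward:
  assumes bS: "bas S" and bT: "bas T" and y: "y \<in> T" "y \<notin> S"
  shows "\<exists>x\<in>S-T. bas (insert y (S - {x}))"
proof -
  have SE: "S \<subseteq> E" "card S = r" using bS bas_sub bas_card by auto
  have TE: "T \<subseteq> E" "card T = r" using bT bas_sub bas_card by auto
  have fS: "finite S" and fT: "finite T" using SE TE finE finite_subset by auto
  have "S - T \<noteq> {}"
  proof
    assume "S - T = {}"
    hence "S \<subseteq> T" by blast
    hence "S = T" using card_subset_eq fT SE TE by metis
    thus False using y by blast
  qed
  then obtain x1 where x1: "x1 \<in> S - T" by blast
  show ?thesis
  proof (cases "S - T = {x1}")
    case True
    have sub: "insert y (S - {x1}) \<subseteq> T" using True y by blast
    have "card (insert y (S - {x1})) = r" using swap_card SE x1 y by blast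
    hence "insert y (S - {x1}) = T" using card_subset_eq[OF fT sub] TE by simp
    thus ?thesis using x1 bT by auto
  next
    case False
    then obtain x2 where x2: "x2 \<in> S - T" "x2 \<noteq> x1" using x1 by blast
    have "bas (insert y (S - {x1})) \<or> bas (insert y (S - {x2}))"
      using two_cand1[OF SE, of y x1 x2] x1 x2 y TE by auto
    thus ?thesis using x1 x2 by blast
  qed
qed

lemma mv12:
  assumes u: "(A1, A2, A3) \<in> V" and x: "x \<in> A1" and y: "y \<in> A2"
    and b1: "bas (insert y (A1 - {x}))" and b2: "bas (insert x (A2 - {y}))"
  shows "R (A1, A2, A3) (insert y (A1 - {x}), insert x (A2 - {y}), A3)"
proof -
  have d: "A1 \<inter> A2 = {}" and A3: "A3 = E - (A1 \<union> A2)" using u by (auto simp: V_def)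
  have v: "(insert y (A1 - {x}), insert x (A2 - {y}), A3) \<in> V" using d A3 b1 b2 x y by (auto simp: V_def)
  have e1: "A1 - insert y (A1 - {x}) = {x}" using x y d by auto
  have e2: "A2 - insert x (A2 - {y}) = {y}" using x y d by auto
  have "bp_adj (A1, A2, A3) (insert y (A1 - {x}), insert x (A2 - {y}), A3)"
    unfolding bp_adj_def using e1 e2 by simp
  thus ?thesis using u v by (simp add: R_def)
qed

lemma mv13:
  assumes u: "(A1, A2, A3) \<in> V" and x: "x \<in> A1" and y: "y \<in> A3"
    and b1: "bas (insert y (A1 - {x}))"
  shows "R (A1, A2, A3) (insert y (A1 - {x}), A2, insert x (A3 - {y}))"
proof -
  have d: "A1 \<inter> A2 = {}" and A3: "A3 = E - (A1 \<union> A2)" and b: "bas A1" "bas A2" using u by (auto simp: V_def)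
  have "A1 \<subseteq> E" using b bas_sub by blast
  hence v: "(insert y (A1 - {x}), A2, insert x (A3 - {y})) \<in> V" using d A3 b1 b x y by (auto simp: V_def)
  have e1: "A1 - insert y (A1 - {x}) = {x}" using x y A3 by auto
  have e2: "A3 - insert x (A3 - {y}) = {y}" using x y A3 by auto
  have "bp_adj (A1, A2, A3) (insert y (A1 - {x}), A2, insert x (A3 - {y}))"
    unfolding bp_adj_def using e1 e2 by simp
  thus ?thesis using u v by (simp add: R_def)
qed

lemma mv23:
  assumes u: "(A1, A2, A3) \<in> V" and x: "x \<in> A2" and y: "y \<in> A3"
    and b2: "bas (insert y (A2 - {x}))"
  shows "R (A1, A2, A3) (A1, insert y (A2 - {x}), insert x (A3 - {y}))"
proof -
  have d: "A1 \<inter> A2 = {}" and A3: "A3 = E - (A1 \<union> A2)" and b: "bas A1" "bas A2" using u by (auto simp: V_def)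
  have "A2 \<subseteq> E" using b bas_sub by blast
  hence v: "(A1, insert y (A2 - {x}), insert x (A3 - {y})) \<in> V" using d A3 b2 b x y by (auto simp: V_def)
  have e1: "A2 - insert y (A2 - {x}) = {x}" using x y A3 by auto
  have e2: "A3 - insert x (A3 - {y}) = {y}" using x y A3 by auto
  have "bp_adj (A1, A2, A3) (A1, insert y (A2 - {x}), insert x (A3 - {y}))"
    unfolding bp_adj_def using e1 e2 by simp
  thus ?thesis using u v by (simp add: R_def)
qed

lemma R_V: "R u v \<Longrightarrow> v \<in> V" by (simp add: R_def)

lemma card_eq_diff:
  assumes "bas S" "bas T" shows "card (S - T) = card (T - S)"
proof -
  have f: "finite S" "finite T" using assms bas_sub finE finite_subset by blast+
  have "card S = card T" using assms bas_card by simp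
  thus ?thesis using f by (simp add: card_Diff_subset_Int Int_commute)
qed

lemma phase2:
  assumes B: "(B1, B2, B3) \<in> V"
  shows "(B1, A2, A3) \<in> V \<Longrightarrow> R\<^sup>*\<^sup>* (B1, A2, A3) (B1, B2, B3)"
proof (induction "card (A2 - B2)" arbitrary: A2 A3 rule: less_induct)
  case less
  have bA2: "bas A2" and dA: "B1 \<inter> A2 = {}" and A3: "A3 = E - (B1 \<union> A2)" using less.prems by (auto simp: V_def)
  have bB2: "bas B2" and dB: "B1 \<inter> B2 = {}" and B3: "B3 = E - (B1 \<union> B2)" using B by (auto simp: V_def)
  show ?case
  proof (cases "A2 = B2")
    case True
    thus ?thesis using A3 B3 by simp
  next
    case False
    have "B2 - A2 \<noteq> {}"
    proof
      assume "B2 - A2 = {}"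
      hence "B2 \<subseteq> A2" by blast
      moreover have "finite A2" using bA2 bas_sub finE finite_subset by blast
      ultimately have "B2 = A2" using card_subset_eq bA2 bB2 bas_card by metis
      thus False using False by simp
    qed
    then obtain y where y: "y \<in> B2" "y \<notin> A2" by blast
    have yA3: "y \<in> A3" using y dB A3 bB2 bas_sub by blast
    obtain x where x: "x \<in> A2 - B2" "bas (insert y (A2 - {x}))" using toward[OF bA2 bB2 y] by blast
    have st: "R (B1, A2, A3) (B1, insert y (A2 - {x}), insert x (A3 - {y}))"
      using mv23[OF less.prems _ yA3] x by blast
    have "insert y (A2 - {x}) - B2 = (A2 - B2) - {x}" using y by auto
    moreover have "finite (A2 - B2)" using bA2 bas_sub finE finite_subset by blast
    ultimately have lt: "card (insert y (A2 - {x}) - B2) < card (A2 - B2)"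
      using x(1) by (metis card_Diff1_less)
    have "R\<^sup>*\<^sup>* (B1, insert y (A2 - {x}), insert x (A3 - {y})) (B1, B2, B3)"
      using less.hyps[OF lt] R_V[OF st] by blast
    thus ?thesis using st by (meson converse_rtranclp_into_rtranclp)
  qed
qed


lemma detour:
  assumes A: "(A1, A2, {}) \<in> V" and B: "(B1, B2, B3) \<in> V"
  and X: "A1 - B1 = {x1, x2}" and Y: "B1 - A1 = {y1, y2}" and xx: "x1 \<noteq> x2" and yy: "y1 \<noteq> y2"
  and T1: "\<not> bas (insert y1 (A1 - {x1}))" and U1: "\<not> bas (insert x2 (A2 - {y1}))"
  and U2: "\<not> bas (insert x1 (A2 - {y2}))"
  shows "\<exists>A2' A3'. R\<^sup>*\<^sup>* (A1, A2, {}) (B1, A2', A3') \<and> (B1, A2', A3') \<in> V"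
proof -
  have bA1: "bas A1" and bA2: "bas A2" and d: "A1 \<inter> A2 = {}" and EA: "E \<subseteq> A1 \<union> A2"
    using A by (auto simp: V_def)
  have bB1: "bas B1" using B by (auto simp: V_def)
  have A1E: "A1 \<subseteq> E" "card A1 = r" using bA1 bas_sub bas_card by auto
  have A2E: "A2 \<subseteq> E" "card A2 = r" using bA2 bas_sub bas_card by auto
  have B1E: "B1 \<subseteq> E" "card B1 = r" using bB1 bas_sub bas_card by auto
  have x: "x1 \<in> A1" "x2 \<in> A1" "x1 \<notin> B1" "x2 \<notin> B1" using X by auto
  have y: "y1 \<in> B1" "y2 \<in> B1" "y1 \<notin> A1" "y2 \<notin> A1" using Y by auto
  have y2: "y1 \<in> A2" "y2 \<in> A2" using y B1E EA by auto
  have x2: "x1 \<notin> A2" "x2 \<notin> A2" using x d by auto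
  show ?thesis
  proof (cases "A1 \<inter> B1 = {}")
    case True
    have a1: "A1 = {x1, x2}" using X True by auto
    have "{y1, y2} \<subseteq> B1" using y by auto
    moreover have "card {y1, y2} = r" using a1 A1E xx yy by simp
    moreover have "finite B1" using B1E finE finite_subset by blast
    ultimately have b1: "B1 = {y1, y2}" using B1E card_subset_eq by metis
    have "{y1, y2} \<subseteq> A2" using y2 by auto
    moreover have "card {y1, y2} = r" using a1 A1E xx yy by simp
    moreover have "finite A2" using A2E finE finite_subset by blast
    ultimately have a2: "A2 = {y1, y2}" using A2E card_subset_eq by metis
    have "bas (insert y1 (A1 - {x1}))"
    proof (rule exch'[where a = y1 and b = y2])
      show "insert y1 (A1 - {x1}) \<subseteq> E" using A1E y2 A2E by auto
      show "card (insert y1 (A1 - {x1})) = r" using swap_card A1E x y by blast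
      show "insert x2 (A2 - {y1}) = insert y2 (insert y1 (A1 - {x1}) - {y1})" using a1 a2 xx yy x2 by auto
    qed (use y2 A2E a1 a2 xx yy x2 U1 in auto)
    thus ?thesis using T1 by blast
  next
    case False
    then obtain c where c: "c \<in> A1" "c \<in> B1" by blast
    have cA2: "c \<notin> A2" using c d by auto
    have cE: "c \<in> E" using c A1E by auto
    define S1 where "S1 = insert y1 (A1 - {c})"
    define W1 where "W1 = insert c (A2 - {y1})"
    define S2 where "S2 = insert y2 (S1 - {x1})"
    define W2 where "W2 = insert x1 (W1 - {y2})"
    define S3 where "S3 = insert c (S2 - {x2})"
    define W3 where "W3 = insert x2 (W2 - {c})"
    have S1E: "S1 \<subseteq> E" "card S1 = r" unfolding S1_def using A1E y2 A2E swap_card c y by auto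
    have W1E: "W1 \<subseteq> E" "card W1 = r" unfolding W1_def using A2E cE swap_card y2 cA2 by auto
    have xc: "x1 \<noteq> c" "x2 \<noteq> c" using x c by auto
    have S2E: "S2 \<subseteq> E" "card S2 = r"
    proof -
      have "x1 \<in> S1" "y2 \<notin> S1" using x xc y yy by (auto simp: S1_def)
      thus "card S2 = r" unfolding S2_def using swap_card[OF S1E] by blast
      show "S2 \<subseteq> E" using S1E y B1E by (auto simp: S2_def)
    qed
    have W2E: "W2 \<subseteq> E" "card W2 = r"
    proof -
      have "y2 \<in> W1" "x1 \<notin> W1" using y2 x2 xc yy by (auto simp: W1_def)
      thus "card W2 = r" unfolding W2_def using swap_card[OF W1E] by blast
      show "W2 \<subseteq> E" using W1E x A1E by (auto simp: W2_def)
    qed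
    have W3E: "W3 \<subseteq> E" "card W3 = r"
    proof -
      have "c \<in> W2" "x2 \<notin> W2" using y2 x2 xc yy xx cA2 y c by (auto simp: W2_def W1_def)
      thus "card W3 = r" unfolding W3_def using swap_card[OF W2E] by blast
      show "W3 \<subseteq> E" using W2E x A1E by (auto simp: W3_def)
    qed
    have bS1: "bas S1"
      by (rule exch'[OF S1E, of x1 c "insert y1 (A1 - {x1})"])
        (use x y c cE cA2 T1 xx in \<open>auto simp: S1_def\<close>)
    have bW1: "bas W1"
      by (rule exch'[OF W1E, of c x2 "insert x2 (A2 - {y1})"])
        (use x x2 y2 y c cE cA2 d U1 xx A1E in \<open>auto simp: W1_def\<close>)
    have bS2: "bas S2"
      by (rule exch'[OF S2E, of y2 c "insert y1 (A1 - {x1})"])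
        (use x y c cE cA2 T1 xx yy in \<open>auto simp: S2_def S1_def\<close>)
    have bW2: "bas W2"
      by (rule exch'[OF W2E, of c y1 "insert x1 (A2 - {y2})"])
        (use x x2 y2 y c cE cA2 d U2 xx yy A2E in \<open>auto simp: W2_def W1_def\<close>)
    have bW3: "bas W3"
      by (rule exch'[OF W3E, of x2 y1 "insert x1 (A2 - {y2})"])
        (use x x2 y2 y c cE cA2 d U2 xx yy A2E in \<open>auto simp: W3_def W2_def W1_def\<close>)
    have S3B: "S3 = B1"
    proof
      show "S3 \<subseteq> B1" using X Y c y by (auto simp: S3_def S2_def S1_def)
      show "B1 \<subseteq> S3"
      proof
        fix e assume "e \<in> B1"
        thus "e \<in> S3" using X Y c y x xx yy by (cases "e \<in> A1") (auto simp: S3_def S2_def S1_def)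
      qed
    qed
    have bS3: "bas S3" using S3B bB1 by simp
    have m1: "R (A1, A2, {}) (S1, W1, {})" unfolding S1_def W1_def using mv12[OF A c(1) y2(1)] bS1 bW1
      by (simp add: S1_def W1_def)
    have m2: "R (S1, W1, {}) (S2, W2, {})"
    proof -
      have "x1 \<in> S1" "y2 \<in> W1" using x xc y2 yy by (auto simp: S1_def W1_def)
      thus ?thesis using mv12[OF R_V[OF m1]] bS2 bW2 unfolding S2_def W2_def by blast
    qed
    have m3: "R (S2, W2, {}) (S3, W3, {})"
    proof -
      have "x2 \<in> S2" "c \<in> W2" using x xc y2 yy xx y c by (auto simp: S2_def S1_def W2_def W1_def)
      thus ?thesis using mv12[OF R_V[OF m2]] bS3 bW3 unfolding S3_def W3_def by blast
    qed
    have "R\<^sup>*\<^sup>* (A1, A2, {}) (S3, W3, {})" using m1 m2 m3 by (meson rtranclp.rtrancl_into_rtrancl rtranclp.rtrancl_refl)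
    thus ?thesis using S3B R_V[OF m3] by blast
  qed
qed


lemma caseI:
  assumes B: "(B1, B2, B3) \<in> V" and A: "(A1, A2, A3) \<in> V" and y: "y \<in> B1" "y \<in> A3"
  shows "\<exists>A1' A2' A3'. R (A1, A2, A3) (A1', A2', A3') \<and> card (A1' - B1) < card (A1 - B1)"
proof -
  have bA1: "bas A1" and A3: "A3 = E - (A1 \<union> A2)" using A by (auto simp: V_def)
  have bB1: "bas B1" using B by (auto simp: V_def)
  have yA1: "y \<notin> A1" using y A3 by auto
  obtain x where x: "x \<in> A1 - B1" "bas (insert y (A1 - {x}))" using toward[OF bA1 bB1 y(1) yA1] by blast
  have st: "R (A1, A2, A3) (insert y (A1 - {x}), A2, insert x (A3 - {y}))"
    using mv13[OF A _ y(2)] x by blast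
  have "insert y (A1 - {x}) - B1 = (A1 - B1) - {x}" using y by auto
  moreover have "finite (A1 - B1)" using bA1 bas_sub finE finite_subset by blast
  ultimately have lt: "card (insert y (A1 - {x}) - B1) < card (A1 - B1)"
    using x(1) by (metis card_Diff1_less)
  thus ?thesis using st by blast
qed

lemma step1:
  assumes B: "(B1, B2, B3) \<in> V" and A: "(A1, A2, A3) \<in> V" and ne: "A1 \<noteq> B1"
  shows "\<exists>A1' A2' A3'. R\<^sup>*\<^sup>* (A1, A2, A3) (A1', A2', A3') \<and> (A1', A2', A3') \<in> V
           \<and> card (A1' - B1) < card (A1 - B1)"
proof -
  have bA1: "bas A1" and bA2: "bas A2" and d: "A1 \<inter> A2 = {}" and A3: "A3 = E - (A1 \<union> A2)"
    using A by (auto simp: V_def)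
  have bB1: "bas B1" and bB2: "bas B2" and dB: "B1 \<inter> B2 = {}" and B3: "B3 = E - (B1 \<union> B2)"
    using B by (auto simp: V_def)
  have A1E: "A1 \<subseteq> E" "card A1 = r" using bA1 bas_sub bas_card by auto
  have A2E: "A2 \<subseteq> E" "card A2 = r" using bA2 bas_sub bas_card by auto
  have B1E: "B1 \<subseteq> E" "card B1 = r" using bB1 bas_sub bas_card by auto
  have B2E: "B2 \<subseteq> E" "card B2 = r" using bB2 bas_sub bas_card by auto
  have fA1: "finite A1" using A1E finE finite_subset by blast
  have fB1: "finite B1" using B1E finE finite_subset by blast
  have ceq: "card (A1 - B1) = card (B1 - A1)" using card_eq_diff[OF bA1 bB1] .
  have decr: "\<And>x y. x \<in> A1 - B1 \<Longrightarrow> y \<in> B1 \<Longrightarrow> card (insert y (A1 - {x}) - B1) < card (A1 - B1)"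
  proof -
    fix x y assume "x \<in> A1 - B1" "y \<in> B1"
    moreover have "insert y (A1 - {x}) - B1 = (A1 - B1) - {x}" using \<open>y \<in> B1\<close> by auto
    moreover have "finite (A1 - B1)" using fA1 by blast
    ultimately show "card (insert y (A1 - {x}) - B1) < card (A1 - B1)" by (metis card_Diff1_less)
  qed
  have kpos: "card (A1 - B1) > 0"
  proof (rule ccontr)
    assume "\<not> ?thesis"
    hence "A1 - B1 = {}" using fA1 by simp
    hence "A1 \<subseteq> B1" by blast
    hence "A1 = B1" using card_subset_eq fB1 A1E B1E by metis
    thus False using ne by simp
  qed
  show ?thesis
  proof (cases "\<exists>y \<in> B1. y \<in> A3")
    case True
    then obtain y where "y \<in> B1" "y \<in> A3" by blast
    then obtain A1' A2' A3' where "R (A1, A2, A3) (A1', A2', A3')" "card (A1' - B1) < card (A1 - B1)"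
      using caseI[OF B A] by blast
    thus ?thesis using R_V by blast
  next
    case nc1: False
    have h1: "\<And>y. y \<in> B1 - A1 \<Longrightarrow> y \<in> A2" using nc1 A3 B1E by blast
    show ?thesis
    proof (cases "\<exists>y \<in> B1 - A1. \<exists>z \<in> A3. bas (insert z (A2 - {y}))")
      case True
      then obtain y z where y: "y \<in> B1 - A1" and z: "z \<in> A3" and bz: "bas (insert z (A2 - {y}))" by blast
      have st: "R (A1, A2, A3) (A1, insert z (A2 - {y}), insert y (A3 - {z}))"
        using mv23[OF A h1[OF y] z bz] .
      have "y \<in> insert y (A3 - {z})" by simp
      then obtain A1' A2' A3' where st2: "R (A1, insert z (A2 - {y}), insert y (A3 - {z})) (A1', A2', A3')"
          and lt: "card (A1' - B1) < card (A1 - B1)"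
        using caseI[OF B R_V[OF st]] y by blast
      have "R\<^sup>*\<^sup>* (A1, A2, A3) (A1', A2', A3')" using st st2 by (meson rtranclp.rtrancl_into_rtrancl rtranclp.rtrancl_refl)
      thus ?thesis using lt R_V[OF st2] by blast
    next
      case nc2: False
      have h2: "\<And>y z. y \<in> B1 - A1 \<Longrightarrow> z \<in> A3 \<Longrightarrow> \<not> bas (insert z (A2 - {y}))" using nc2 by blast
      show ?thesis
      proof (cases "\<exists>x \<in> A1 - B1. \<exists>y \<in> B1 - A1. bas (insert y (A1 - {x})) \<and> bas (insert x (A2 - {y}))")
        case True
        then obtain x y where x: "x \<in> A1 - B1" and y: "y \<in> B1 - A1"
          and b: "bas (insert y (A1 - {x}))" "bas (insert x (A2 - {y}))" by blast
        have st: "R (A1, A2, A3) (insert y (A1 - {x}), insert x (A2 - {y}), A3)"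
          using mv12[OF A _ h1[OF y] b] x by blast
        thus ?thesis using decr[OF x] y R_V[OF st] by blast
      next
        case nc3: False
        have h3: "\<And>x y. x \<in> A1 - B1 \<Longrightarrow> y \<in> B1 - A1 \<Longrightarrow> \<not> bas (insert y (A1 - {x})) \<or> \<not> bas (insert x (A2 - {y}))"
          using nc3 by blast
        have xE: "\<And>x. x \<in> A1 - B1 \<Longrightarrow> x \<in> E \<and> x \<notin> A2" using A1E d by blast
        have yE: "\<And>y. y \<in> B1 - A1 \<Longrightarrow> y \<in> E \<and> y \<notin> A1 \<and> y \<in> A2" using B1E h1 by blast
        consider (k1) "card (A1 - B1) = 1" | (k2) "card (A1 - B1) = 2" | (k3) "card (A1 - B1) \<ge> 3"
          using kpos by linarith
        then show ?thesis
        proof cases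
          case k3
          obtain T where T: "T \<subseteq> A1 - B1" "card T = 3" using obtain_subset_with_card_n[OF k3] by blast
          then obtain a b c where abc: "T = {a, b, c}" "a \<noteq> b" "b \<noteq> c" "a \<noteq> c" using card_3_iff by metis
          have abcS: "a \<in> A1 - B1" "b \<in> A1 - B1" "c \<in> A1 - B1" using T abc by auto
          have "B1 - A1 \<noteq> {}"
          proof
            assume "B1 - A1 = {}"
            thus False using ceq kpos by (metis card.empty less_irrefl)
          qed
          then obtain y where y: "y \<in> B1 - A1" by blast
          have c1: "\<And>p q. p \<in> A1 - B1 \<Longrightarrow> q \<in> A1 - B1 \<Longrightarrow> p \<noteq> q \<Longrightarrow>
                    bas (insert y (A1 - {p})) \<or> bas (insert y (A1 - {q}))"
            using two_cand1[OF A1E] yE[OF y] by blast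
          have c2: "\<And>p q. p \<in> A1 - B1 \<Longrightarrow> q \<in> A1 - B1 \<Longrightarrow> p \<noteq> q \<Longrightarrow>
                    bas (insert p (A2 - {y})) \<or> bas (insert q (A2 - {y}))"
            using two_cand2[OF A2E] yE[OF y] xE by blast
          have "bas (insert y (A1 - {a})) \<or> bas (insert y (A1 - {b}))" using c1 abcS abc by blast
          moreover have "bas (insert y (A1 - {a})) \<or> bas (insert y (A1 - {c}))" using c1 abcS abc by blast
          moreover have "bas (insert y (A1 - {b})) \<or> bas (insert y (A1 - {c}))" using c1 abcS abc by blast
          moreover have "bas (insert a (A2 - {y})) \<or> bas (insert b (A2 - {y}))" using c2 abcS abc by blast
          moreover have "bas (insert a (A2 - {y})) \<or> bas (insert c (A2 - {y}))" using c2 abcS abc by blast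
          moreover have "bas (insert b (A2 - {y})) \<or> bas (insert c (A2 - {y}))" using c2 abcS abc by blast
          moreover have "\<not> bas (insert y (A1 - {a})) \<or> \<not> bas (insert a (A2 - {y}))" using h3 abcS y by blast
          moreover have "\<not> bas (insert y (A1 - {b})) \<or> \<not> bas (insert b (A2 - {y}))" using h3 abcS y by blast
          moreover have "\<not> bas (insert y (A1 - {c})) \<or> \<not> bas (insert c (A2 - {y}))" using h3 abcS y by blast
          ultimately show ?thesis by blast
        next
          case k1
          then obtain x where X: "A1 - B1 = {x}" using card_1_singletonE by blast
          have "card (B1 - A1) = 1" using k1 ceq by simp
          then obtain y where Y: "B1 - A1 = {y}" using card_1_singletonE by blast
          have xy: "x \<in> A1 - B1" "y \<in> B1 - A1" using X Y by auto
          have sub: "insert y (A1 - {x}) \<subseteq> B1" using X Y by blast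
          have "card (insert y (A1 - {x})) = r" using swap_card[OF A1E] xy by blast
          hence eqB: "insert y (A1 - {x}) = B1" using card_subset_eq[OF fB1 sub] B1E by simp
          hence nb: "\<not> bas (insert x (A2 - {y}))" using h3[OF xy] bB1 by simp
          show ?thesis
          proof (cases "A3 = {}")
            case True
            have EU: "E = A1 \<union> A2" using True A3 A1E A2E by blast
            have "card E = card A1 + card A2" using EU d card_Un_disjoint fA1 A2E finE finite_subset by metis
            hence cE: "card (E - B1) = r" using A1E A2E B1E card_Diff_subset[OF fB1 B1E(1)] by simp
            have "B2 \<subseteq> E - B1" using B2E dB by blast
            hence "B2 = E - B1" using card_subset_eq[of "E - B1" B2] finE cE B2E by simp
            moreover have "insert x (A2 - {y}) = E - B1" using EU eqB[symmetric] xy d by auto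
            ultimately show ?thesis using nb bB2 by simp
          next
            case False
            then obtain z where z: "z \<in> A3" by blast
            have zE: "z \<in> E" "z \<notin> A2" "z \<noteq> x" using z A3 xy by auto
            have "bas (insert x (A2 - {y})) \<or> bas (insert z (A2 - {y}))"
              using two_cand2[OF A2E, of y x z] yE[OF xy(2)] xE[OF xy(1)] zE by blast
            thus ?thesis using nb h2[OF xy(2) z] by blast
          qed
        next
          case k2
          then obtain x1 x2 where X: "A1 - B1 = {x1, x2}" "x1 \<noteq> x2" using card_2_iff by metis
          have "card (B1 - A1) = 2" using k2 ceq by simp
          then obtain y1 y2 where Y: "B1 - A1 = {y1, y2}" "y1 \<noteq> y2" using card_2_iff by metis
          have xs: "x1 \<in> A1 - B1" "x2 \<in> A1 - B1" and ys: "y1 \<in> B1 - A1" "y2 \<in> B1 - A1" using X Y by auto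
          have A3e: "A3 = {}"
          proof (rule ccontr)
            assume "A3 \<noteq> {}"
            then obtain z where z: "z \<in> A3" by blast
            have "bas (insert z (A2 - {y1})) \<or> bas (insert z (A2 - {y2}))"
              using two_cand1[OF A2E, of z y1 y2] z A3 yE[OF ys(1)] yE[OF ys(2)] Y(2) by blast
            thus False using h2 ys z by blast
          qed
          have A': "(A1, A2, {}) \<in> V" using A A3e by simp
          have m: "\<exists>A2' A3'. R\<^sup>*\<^sup>* (A1, A2, {}) (B1, A2', A3') \<and> (B1, A2', A3') \<in> V"
          proof (cases "bas (insert y1 (A1 - {x1}))")
            case False
            have "bas (insert y1 (A1 - {x2}))" using False two_cand1[OF A1E, of y1 x1 x2] xs yE[OF ys(1)] X(2) by blast
            hence U1: "\<not> bas (insert x2 (A2 - {y1}))" using h3 xs ys by blast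
            have "bas (insert y2 (A1 - {x1}))" using False two_cand2[OF A1E, of x1 y1 y2] xs yE ys Y(2) by blast
            hence U2: "\<not> bas (insert x1 (A2 - {y2}))" using h3 xs ys by blast
            show ?thesis by (rule detour[OF A' B X(1) Y(1) X(2) Y(2) False U1 U2])
          next
            case True
            hence U1': "\<not> bas (insert x1 (A2 - {y1}))" using h3 xs ys by blast
            have "bas (insert x2 (A2 - {y1}))" using U1' two_cand2[OF A2E, of y1 x1 x2] xs xE yE ys X(2) by blast
            hence T1: "\<not> bas (insert y1 (A1 - {x2}))" using h3 xs ys by blast
            have "bas (insert y2 (A1 - {x2}))" using T1 two_cand2[OF A1E, of x2 y1 y2] xs yE ys Y(2) by blast
            hence U2: "\<not> bas (insert x2 (A2 - {y2}))" using h3 xs ys by blast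
            have X': "A1 - B1 = {x2, x1}" using X by auto
            show ?thesis by (rule detour[OF A' B X' Y(1) X(2)[symmetric] Y(2) T1 U1' U2])
          qed
          then obtain A2' A3' where "R\<^sup>*\<^sup>* (A1, A2, A3) (B1, A2', A3')" "(B1, A2', A3') \<in> V"
            using A3e by blast
          thus ?thesis using kpos by fastforce
        qed
      qed
    qed
  qed
qed

lemma phase1:
  assumes B: "(B1, B2, B3) \<in> V"
  shows "(A1, A2, A3) \<in> V \<Longrightarrow> \<exists>A2' A3'. R\<^sup>*\<^sup>* (A1, A2, A3) (B1, A2', A3') \<and> (B1, A2', A3') \<in> V"
proof (induction "card (A1 - B1)" arbitrary: A1 A2 A3 rule: less_induct)
  case less
  show ?case
  proof (cases "A1 = B1")
    case True
    thus ?thesis using less.prems by blast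
  next
    case False
    obtain A1' A2' A3' where s: "R\<^sup>*\<^sup>* (A1, A2, A3) (A1', A2', A3')" "(A1', A2', A3') \<in> V"
      "card (A1' - B1) < card (A1 - B1)" using step1[OF B less.prems False] by blast
    obtain A2'' A3'' where "R\<^sup>*\<^sup>* (A1', A2', A3') (B1, A2'', A3'')" "(B1, A2'', A3'') \<in> V"
      using less.hyps[OF s(3) s(2)] by blast
    thus ?thesis using s(1) by (meson rtranclp_trans)
  qed
qed

lemma connected: "u \<in> V \<Longrightarrow> v \<in> V \<Longrightarrow> R\<^sup>*\<^sup>* u v"
proof -
  assume u: "u \<in> V" and v: "v \<in> V"
  obtain A1 A2 A3 where uu: "u = (A1, A2, A3)" by (cases u) auto
  obtain B1 B2 B3 where vv: "v = (B1, B2, B3)" by (cases v) auto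
  obtain A2' A3' where p: "R\<^sup>*\<^sup>* u (B1, A2', A3')" "(B1, A2', A3') \<in> V"
    using phase1[of B1 B2 B3 A1 A2 A3] u v uu vv by blast
  have "R\<^sup>*\<^sup>* (B1, A2', A3') v" using phase2[of B1 B2 B3 A2' A3'] p(2) v vv by blast
  thus ?thesis using p(1) by (meson rtranclp_trans)
qed

end

theorem theorem2p3:
  fixes E :: "'a set" and indep :: "'a set \<Rightarrow> bool"
  assumes "sparse_paving E indep"
  shows "graph_connected (bp_vertices E indep) bp_adj"
proof -
  have sp: "sparse_paving E indep" by fact
  have m: "matroid E indep" using sp by (simp add: sparse_paving_def)
  interpret spx E "mrank E indep" "basis E indep"
  proof
    show "finite E" using m by (simp add: matroid_def)
  next
    fix S assume "basis E indep S"
    thus "S \<subseteq> E" using indep_sub[OF m] by (simp add: basis_def)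
  next
    fix S assume "basis E indep S"
    thus "card S = mrank E indep" using basis_iff[OF m] by simp
  next
    fix X a b assume X: "X \<subseteq> E" "card X = mrank E indep" "a \<in> X" "b \<in> E" "b \<notin> X"
    have fX: "finite X" using X m finite_subset by (auto simp: matroid_def)
    have "card X > 0" using fX X card_gt_0_iff by blast
    hence "card (insert b (X - {a})) = mrank E indep" using X fX by simp
    thus "basis E indep X \<or> basis E indep (insert b (X - {a}))"
      using exch_m[OF sp X] basis_iff[OF m] X by blast
  qed
  have VV: "bp_vertices E indep = V" by (simp add: V_def bp_vertices_def)
  show ?thesis unfolding graph_connected_def VV using connected unfolding R_def by blast
qed

end
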